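(* Let $\mathcal A\in\mathbb R^{n_1}\otimes\cdots\otimes\mathbb R^{n_k}$, $1\le s\le k$, $r\le\min\{n_1,\dots,n_k\}$. A point $(U,\mathbf x)\in W_{\mathbf n,r,*}$ is a critical point of $g(U,\mathbf x)=\frac12\|\mathcal A-(U^{(1)},\dots,U^{(k)})\cdot\operatorname{diag}_k(\mathbf x)\|^2$ on $W_{\mathbf n,r,*}$ if and only if $(U,\operatorname{diag}_k(\mathbf x))$ is a KKT point of problem (LRPOTA).
   Context: $\mathrm V(r,n)=\{U\in\mathbb R^{n\times r}:U^{\mathsf T}U=I_r\}$; $\mathrm B(r,n)$: $n\times r$ real matrices with unit columns; $\mathrm{OB}(r,n)$: full-column-rank elements of $\mathrm B(r,n)$. $W_{\mathbf n,r,*}=\mathrm V(r,n_1)\times\cdots\times\mathrm V(r,n_s)\times\mathrm{OB}(r,n_{s+1})\times\cdots\times\mathrm{OB}(r,n_k)\times(\mathbb R\setminus\{0\})^r$, a smooth manifold; critical points of $g$ on it are points where its Riemannian gradient vanishes. $(U^{(1)},\dots,U^{(k)})\cdot\operatorname{diag}_k(\mathbf x)=\sum_jx_j\mathbf u^{(1)}_j\otimes\cdots\otimes\mathbf u^{(k)}_j$. Problem (LRPOTA): minimize $G(U,\lambda)=\|\mathcal A-(U^{(1)},\dots,U^{(k)})\cdot\operatorname{diag}_k(\lambda)\|^2$ over $\lambda\in\mathbb R^r$, $U^{(i)}\in\mathrm V(r,n_i)$ ($i\le s$), $U^{(i)}\in\mathrm B(r,n_i)$ ($i>s$). A feasible $(U,\operatorname{diag}_k(\lambda))$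 is a KKT point if there exist symmetric $P_1,\dots,P_s\in\mathbb R^{r\times r}$ and $\mathbf p_{s+1},\dots,\mathbf p_k\in\mathbb R^r$ with $\nabla_{U^{(i)}}G(U,\lambda)=U^{(i)}P_i$ for $i\le s$, $\nabla_{U^{(i)}}G(U,\lambda)=U^{(i)}\operatorname{diag}(\mathbf p_i)$ for $i>s$, and $\nabla_\lambda G(U,\lambda)=0$ (Lagrange stationarity for the constraints $(U^{(i)})^{\mathsf T}U^{(i)}=I_r$ and unit-norm columns). *)

theory Defs
  imports "HOL-Analysis.Analysis"
begin

text \<open>Modes are 0-indexed: mode i ranges over 0..<k (paper: i+1).
  Factor matrices: U i a j = entry (a,j) of U^(i+1), a < n i, j < r.
  Tensors: functions on multi-indices in tidx k n.\<close>

definition tidx :: "nat \<Rightarrow> (nat \<Rightarrow> nat) \<Rightarrow> (nat \<Rightarrow> nat) set" where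
  "tidx k n = PiE {..<k} (\<lambda>i. {..<n i})"

definition cpd :: "nat \<Rightarrow> nat \<Rightarrow> (nat \<Rightarrow> nat \<Rightarrow> nat \<Rightarrow> real) \<Rightarrow> (nat \<Rightarrow> real)
                    \<Rightarrow> (nat \<Rightarrow> nat) \<Rightarrow> real" where
  "cpd k r U x = (\<lambda>\<iota>. \<Sum>j<r. x j * (\<Prod>i<k. U i (\<iota> i) j))"

definition LG :: "nat \<Rightarrow> (nat \<Rightarrow> nat) \<Rightarrow> nat \<Rightarrow> ((nat \<Rightarrow> nat) \<Rightarrow> real)
                   \<Rightarrow> (nat \<Rightarrow> nat \<Rightarrow> nat \<Rightarrow> real) \<Rightarrow> (nat \<Rightarrow> real) \<Rightarrow> real" where
  "LG k n r A U x = (\<Sum>\<iota>\<in>tidx k n. (A \<iota> - cpd k r U x \<iota>)^2)"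

definition lg :: "nat \<Rightarrow> (nat \<Rightarrow> nat) \<Rightarrow> nat \<Rightarrow> ((nat \<Rightarrow> nat) \<Rightarrow> real)
                   \<Rightarrow> (nat \<Rightarrow> nat \<Rightarrow> nat \<Rightarrow> real) \<Rightarrow> (nat \<Rightarrow> real) \<Rightarrow> real" where
  "lg k n r A U x = LG k n r A U x / 2"

definition col_inner :: "(nat \<Rightarrow> nat) \<Rightarrow> (nat \<Rightarrow> nat \<Rightarrow> nat \<Rightarrow> real) \<Rightarrow> nat \<Rightarrow> nat \<Rightarrow> nat \<Rightarrow> real" where
  "col_inner n U i j l = (\<Sum>a<n i. U i a j * U i a l)"

definition is_stiefel :: "(nat \<Rightarrow> nat) \<Rightarrow> nat \<Rightarrow> (nat \<Rightarrow> nat \<Rightarrow> nat \<Rightarrow> real) \<Rightarrow> nat \<Rightarrow> bool" where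
  "is_stiefel n r U i = (\<forall>j<r. \<forall>l<r. col_inner n U i j l = (if j = l then 1 else 0))"

definition is_unitcol :: "(nat \<Rightarrow> nat) \<Rightarrow> nat \<Rightarrow> (nat \<Rightarrow> nat \<Rightarrow> nat \<Rightarrow> real) \<Rightarrow> nat \<Rightarrow> bool" where
  "is_unitcol n r U i = (\<forall>j<r. col_inner n U i j j = 1)"

definition full_col_rank :: "(nat \<Rightarrow> nat) \<Rightarrow> nat \<Rightarrow> (nat \<Rightarrow> nat \<Rightarrow> nat \<Rightarrow> real) \<Rightarrow> nat \<Rightarrow> bool" where
  "full_col_rank n r U i =
     (\<forall>c. (\<forall>a<n i. (\<Sum>j<r. c j * U i a j) = 0) \<longrightarrow> (\<forall>j<r. c j = 0))"

definition in_W :: "nat \<Rightarrow> nat \<Rightarrow> (nat \<Rightarrow> nat) \<Rightarrow> nat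
                    \<Rightarrow> (nat \<Rightarrow> nat \<Rightarrow> nat \<Rightarrow> real) \<Rightarrow> (nat \<Rightarrow> real) \<Rightarrow> bool" where
  "in_W k s n r U x =
     ((\<forall>i<s. is_stiefel n r U i) \<and>
      (\<forall>i. s \<le> i \<and> i < k \<longrightarrow> is_unitcol n r U i \<and> full_col_rank n r U i) \<and>
      (\<forall>j<r. x j \<noteq> 0))"

text \<open>Critical point of g on the manifold W: the differential of g vanishes on the tangent
  space, i.e. the derivative of g along every curve in W through the point, differentiable
  at the point, is zero (equivalently, the Riemannian gradient vanishes).\<close>
definition critical_point_W :: "nat \<Rightarrow> nat \<Rightarrow> (nat \<Rightarrow> nat) \<Rightarrow> nat \<Rightarrow> ((nat \<Rightarrow> nat) \<Rightarrow> real)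
                    \<Rightarrow> (nat \<Rightarrow> nat \<Rightarrow> nat \<Rightarrow> real) \<Rightarrow> (nat \<Rightarrow> real) \<Rightarrow> bool" where
  "critical_point_W k s n r A U x =
     (in_W k s n r U x \<and>
      (\<forall>(\<epsilon>::real) (Uc :: real \<Rightarrow> nat \<Rightarrow> nat \<Rightarrow> nat \<Rightarrow> real) (xc :: real \<Rightarrow> nat \<Rightarrow> real).
         \<epsilon> > 0 \<longrightarrow>
         (\<forall>t. \<bar>t\<bar> < \<epsilon> \<longrightarrow> in_W k s n r (Uc t) (xc t)) \<longrightarrow>
         (\<forall>i<k. \<forall>a<n i. \<forall>j<r. Uc 0 i a j = U i a j) \<longrightarrow>
         (\<forall>j<r. xc 0 j = x j) \<longrightarrow>
         (\<forall>i<k. \<forall>a<n i. \<forall>j<r. (\<lambda>t. Uc t i a j) differentiable (at 0)) \<longrightarrow>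
         (\<forall>j<r. (\<lambda>t. xc t j) differentiable (at 0)) \<longrightarrow>
         ((\<lambda>t. lg k n r A (Uc t) (xc t)) has_real_derivative 0) (at 0)))"

definition gradU :: "nat \<Rightarrow> (nat \<Rightarrow> nat) \<Rightarrow> nat \<Rightarrow> ((nat \<Rightarrow> nat) \<Rightarrow> real)
                    \<Rightarrow> (nat \<Rightarrow> nat \<Rightarrow> nat \<Rightarrow> real) \<Rightarrow> (nat \<Rightarrow> real) \<Rightarrow> nat \<Rightarrow> nat \<Rightarrow> nat \<Rightarrow> real" where
  "gradU k n r A U x i a j =
     deriv (\<lambda>t. LG k n r A (U(i := (U i)(a := (U i a)(j := U i a j + t)))) x) 0"

definition gradx :: "nat \<Rightarrow> (nat \<Rightarrow> nat) \<Rightarrow> nat \<Rightarrow> ((nat \<Rightarrow> nat) \<Rightarrow> real)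
                    \<Rightarrow> (nat \<Rightarrow> nat \<Rightarrow> nat \<Rightarrow> real) \<Rightarrow> (nat \<Rightarrow> real) \<Rightarrow> nat \<Rightarrow> real" where
  "gradx k n r A U x j = deriv (\<lambda>t. LG k n r A U (x(j := x j + t))) 0"

definition feasible_LRPOTA :: "nat \<Rightarrow> nat \<Rightarrow> (nat \<Rightarrow> nat) \<Rightarrow> nat
                    \<Rightarrow> (nat \<Rightarrow> nat \<Rightarrow> nat \<Rightarrow> real) \<Rightarrow> bool" where
  "feasible_LRPOTA k s n r U =
     ((\<forall>i<s. is_stiefel n r U i) \<and> (\<forall>i. s \<le> i \<and> i < k \<longrightarrow> is_unitcol n r U i))"

definition KKT_point :: "nat \<Rightarrow> nat \<Rightarrow> (nat \<Rightarrow> nat) \<Rightarrow> nat \<Rightarrow> ((nat \<Rightarrow> nat) \<Rightarrow> real)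
                    \<Rightarrow> (nat \<Rightarrow> nat \<Rightarrow> nat \<Rightarrow> real) \<Rightarrow> (nat \<Rightarrow> real) \<Rightarrow> bool" where
  "KKT_point k s n r A U lam =
     (feasible_LRPOTA k s n r U \<and>
      (\<exists>P :: nat \<Rightarrow> nat \<Rightarrow> nat \<Rightarrow> real.
         (\<forall>i<s. \<forall>j<r. \<forall>l<r. P i j l = P i l j) \<and>
         (\<forall>i<s. \<forall>a<n i. \<forall>j<r. gradU k n r A U lam i a j = (\<Sum>l<r. U i a l * P i l j))) \<and>
      (\<exists>p :: nat \<Rightarrow> nat \<Rightarrow> real.
         \<forall>i. s \<le> i \<and> i < k \<longrightarrow>
           (\<forall>a<n i. \<forall>j<r. gradU k n r A U lam i a j = U i a j * p i j)) \<and>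
      (\<forall>j<r. gradx k n r A U lam j = 0))"

end

theory Submission
  imports Defs
begin


definition Rs :: "nat \<Rightarrow> (nat \<Rightarrow> nat) \<Rightarrow> nat \<Rightarrow> ((nat \<Rightarrow> nat) \<Rightarrow> real)
   \<Rightarrow> (nat \<Rightarrow> nat \<Rightarrow> nat \<Rightarrow> real) \<Rightarrow> (nat \<Rightarrow> real) \<Rightarrow> (nat \<Rightarrow> nat) \<Rightarrow> real" where
  "Rs k n r A U x \<iota> = A \<iota> - cpd k r U x \<iota>"

definition DL :: "nat \<Rightarrow> (nat \<Rightarrow> nat) \<Rightarrow> nat \<Rightarrow> ((nat \<Rightarrow> nat) \<Rightarrow> real)
   \<Rightarrow> (nat \<Rightarrow> nat \<Rightarrow> nat \<Rightarrow> real) \<Rightarrow> (nat \<Rightarrow> real)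
   \<Rightarrow> (nat \<Rightarrow> nat \<Rightarrow> nat \<Rightarrow> real) \<Rightarrow> (nat \<Rightarrow> real) \<Rightarrow> real" where
  "DL k n r A U x V y = -2 * (\<Sum>\<iota>\<in>tidx k n. Rs k n r A U x \<iota> *
     (\<Sum>j<r. y j * (\<Prod>m<k. U m (\<iota> m) j) +
        x j * (\<Sum>i<k. V i (\<iota> i) j * (\<Prod>m\<in>{..<k}-{i}. U m (\<iota> m) j))))"

definition GU where
  "GU k n r A U x i a j = -2 * (\<Sum>\<iota>\<in>tidx k n. Rs k n r A U x \<iota> *
     (x j * (if \<iota> i = a then (\<Prod>m\<in>{..<k}-{i}. U m (\<iota> m) j) else 0)))"

definition GX where
  "GX k n r A U x j = -2 * (\<Sum>\<iota>\<in>tidx k n. Rs k n r A U x \<iota> * (\<Prod>m<k. U m (\<iota> m) j))"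

lemma finite_tidx: "finite (tidx k n)"
  unfolding tidx_def by (simp add: finite_PiE)

lemma tidx_lt: "\<iota> \<in> tidx k n \<Longrightarrow> i < k \<Longrightarrow> \<iota> i < n i"
  unfolding tidx_def by auto

lemma chain:
  assumes hU: "\<And>i a j. i<k \<Longrightarrow> a<n i \<Longrightarrow> j<r \<Longrightarrow> ((\<lambda>t. Uc t i a j) has_real_derivative V i a j) (at 0)"
    and hx: "\<And>j. j<r \<Longrightarrow> ((\<lambda>t. xc t j) has_real_derivative y j) (at 0)"
    and h0U: "\<And>i a j. i<k \<Longrightarrow> a<n i \<Longrightarrow> j<r \<Longrightarrow> Uc 0 i a j = U i a j"
    and h0x: "\<And>j. j<r \<Longrightarrow> xc 0 j = x j"
  shows "((\<lambda>t. LG k n r A (Uc t) (xc t)) has_real_derivative DL k n r A U x V y) (at 0)"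
proof -
  have P: "((\<lambda>t. \<Prod>m<k. Uc t m (\<iota> m) j) has_real_derivative
      (\<Sum>i<k. V i (\<iota> i) j * (\<Prod>m\<in>{..<k}-{i}. U m (\<iota> m) j))) (at 0)"
    if "\<iota> \<in> tidx k n" "j < r" for \<iota> j
  proof -
    have "((\<lambda>t. \<Prod>m<k. Uc t m (\<iota> m) j) has_real_derivative
      (\<Sum>i<k. V i (\<iota> i) j * (\<Prod>m\<in>{..<k}-{i}. Uc 0 m (\<iota> m) j))) (at 0)"
      by (rule has_field_derivative_prod) (use hU tidx_lt that in auto)
    moreover have "(\<Sum>i<k. V i (\<iota> i) j * (\<Prod>m\<in>{..<k}-{i}. Uc 0 m (\<iota> m) j))
       = (\<Sum>i<k. V i (\<iota> i) j * (\<Prod>m\<in>{..<k}-{i}. U m (\<iota> m) j))"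
      by (intro sum.cong refl arg_cong2[where f="(*)"] prod.cong) (use h0U tidx_lt that in auto)
    ultimately show ?thesis by simp
  qed
  have C: "((\<lambda>t. cpd k r (Uc t) (xc t) \<iota>) has_real_derivative
     (\<Sum>j<r. y j * (\<Prod>m<k. U m (\<iota> m) j) +
        x j * (\<Sum>i<k. V i (\<iota> i) j * (\<Prod>m\<in>{..<k}-{i}. U m (\<iota> m) j)))) (at 0)"
    if "\<iota> \<in> tidx k n" for \<iota>
  proof -
    have "((\<lambda>t. \<Sum>j<r. xc t j * (\<Prod>m<k. Uc t m (\<iota> m) j)) has_real_derivative
     (\<Sum>j<r. xc 0 j * (\<Sum>i<k. V i (\<iota> i) j * (\<Prod>m\<in>{..<k}-{i}. U m (\<iota> m) j))
        + y j * (\<Prod>m<k. Uc 0 m (\<iota> m) j))) (at 0)"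
      by (intro DERIV_sum DERIV_mult' hx P that) auto
    moreover have "(\<Sum>j<r. xc 0 j * (\<Sum>i<k. V i (\<iota> i) j * (\<Prod>m\<in>{..<k}-{i}. U m (\<iota> m) j))
        + y j * (\<Prod>m<k. Uc 0 m (\<iota> m) j)) =
       (\<Sum>j<r. y j * (\<Prod>m<k. U m (\<iota> m) j) +
        x j * (\<Sum>i<k. V i (\<iota> i) j * (\<Prod>m\<in>{..<k}-{i}. U m (\<iota> m) j)))"
    proof (intro sum.cong refl)
      fix j assume j: "j \<in> {..<r}"
      have "(\<Prod>m<k. Uc 0 m (\<iota> m) j) = (\<Prod>m<k. U m (\<iota> m) j)"
        by (intro prod.cong refl) (use h0U tidx_lt that j in auto)
      then show "xc 0 j * (\<Sum>i<k. V i (\<iota> i) j * (\<Prod>m\<in>{..<k}-{i}. U m (\<iota> m) j))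
        + y j * (\<Prod>m<k. Uc 0 m (\<iota> m) j) = y j * (\<Prod>m<k. U m (\<iota> m) j) +
        x j * (\<Sum>i<k. V i (\<iota> i) j * (\<Prod>m\<in>{..<k}-{i}. U m (\<iota> m) j))"
        using h0x j by simp
    qed
    ultimately show ?thesis unfolding cpd_def by simp
  qed
  have c0: "cpd k r (Uc 0) (xc 0) \<iota> = cpd k r U x \<iota>" if "\<iota> \<in> tidx k n" for \<iota>
    unfolding cpd_def
    by (intro sum.cong refl arg_cong2[where f="(*)"] prod.cong) (use h0U h0x tidx_lt that in auto)
  have "((\<lambda>t. \<Sum>\<iota>\<in>tidx k n. (A \<iota> - cpd k r (Uc t) (xc t) \<iota>)^2) has_real_derivative
     (\<Sum>\<iota>\<in>tidx k n. of_nat 2 * ((0 -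
      (\<Sum>j<r. y j * (\<Prod>m<k. U m (\<iota> m) j) +
        x j * (\<Sum>i<k. V i (\<iota> i) j * (\<Prod>m\<in>{..<k}-{i}. U m (\<iota> m) j)))) * (A \<iota> - cpd k r (Uc 0) (xc 0) \<iota>)^(2-Suc 0)))) (at 0)"
    by (intro DERIV_sum DERIV_power DERIV_diff DERIV_const C)
  moreover have "(\<Sum>\<iota>\<in>tidx k n. of_nat 2 * ((0 -
      (\<Sum>j<r. y j * (\<Prod>m<k. U m (\<iota> m) j) +
        x j * (\<Sum>i<k. V i (\<iota> i) j * (\<Prod>m\<in>{..<k}-{i}. U m (\<iota> m) j)))) * (A \<iota> - cpd k r (Uc 0) (xc 0) \<iota>)^(2-Suc 0))) = DL k n r A U x V y"
    unfolding DL_def Rs_def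
    by (subst sum_distrib_left) (intro sum.cong refl; simp add: c0)
  ultimately show ?thesis unfolding LG_def by simp
qed

lemma delta_sum:
  assumes "b < (N::nat)"
  shows "(\<Sum>a<N. f a * (if b = a then c else 0)) = f b * (c::real)"
proof -
  have "(\<Sum>a<N. f a * (if b = a then c else 0)) = (\<Sum>a\<in>{..<N}. if b = a then f a * c else 0)"
    by (intro sum.cong) auto
  also have "\<dots> = f b * c" using assms by (subst sum.delta') auto
  finally show ?thesis .
qed

lemma DL_lin:
  "DL k n r A U x V y = (\<Sum>i<k. \<Sum>a<n i. \<Sum>j<r. V i a j * GU k n r A U x i a j)
     + (\<Sum>j<r. y j * GX k n r A U x j)"
proof -
  let ?R = "Rs k n r A U x"
  have 1: "(\<Sum>j<r. y j * GX k n r A U x j) =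
    -2 * (\<Sum>\<iota>\<in>tidx k n. ?R \<iota> * (\<Sum>j<r. y j * (\<Prod>m<k. U m (\<iota> m) j)))"
    unfolding GX_def sum_distrib_left
    by (subst sum.swap) (intro sum.cong refl; simp add: algebra_simps)
  have 2: "(\<Sum>i<k. \<Sum>a<n i. \<Sum>j<r. V i a j * GU k n r A U x i a j) =
    -2 * (\<Sum>\<iota>\<in>tidx k n. ?R \<iota> * (\<Sum>j<r. x j * (\<Sum>i<k. V i (\<iota> i) j * (\<Prod>m\<in>{..<k}-{i}. U m (\<iota> m) j))))"
  proof -
    have "(\<Sum>i<k. \<Sum>a<n i. \<Sum>j<r. V i a j * GU k n r A U x i a j) =
      (\<Sum>i<k. \<Sum>a<n i. \<Sum>j<r. \<Sum>\<iota>\<in>tidx k n. -2 * (?R \<iota> * (x j *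
         (V i a j * (if \<iota> i = a then (\<Prod>m\<in>{..<k}-{i}. U m (\<iota> m) j) else 0)))))"
      unfolding GU_def sum_distrib_left by (simp add: algebra_simps)
    also have "\<dots> = (\<Sum>i<k. \<Sum>j<r. \<Sum>\<iota>\<in>tidx k n. \<Sum>a<n i. -2 * (?R \<iota> * (x j *
         (V i a j * (if \<iota> i = a then (\<Prod>m\<in>{..<k}-{i}. U m (\<iota> m) j) else 0)))))"
      apply (rule sum.cong[OF refl])
      apply (rule trans[OF sum.swap])
      apply (intro sum.cong refl)
      apply (rule sum.swap)
      done
    also have "\<dots> = (\<Sum>i<k. \<Sum>j<r. \<Sum>\<iota>\<in>tidx k n. -2 * (?R \<iota> * (x j *
         (V i (\<iota> i) j * (\<Prod>m\<in>{..<k}-{i}. U m (\<iota> m) j)))))"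
    proof (intro sum.cong refl)
      fix i j \<iota> assume i: "i \<in> {..<k}" and "j \<in> {..<r}" and t: "\<iota> \<in> tidx k n"
      have "(\<Sum>a<n i. -2 * (?R \<iota> * (x j *
         (V i a j * (if \<iota> i = a then (\<Prod>m\<in>{..<k}-{i}. U m (\<iota> m) j) else 0)))))
        = -2 * (?R \<iota> * (x j * (\<Sum>a<n i. V i a j * (if \<iota> i = a then (\<Prod>m\<in>{..<k}-{i}. U m (\<iota> m) j) else 0))))"
        by (simp add: sum_distrib_left)
      also have "\<dots> = -2 * (?R \<iota> * (x j * (V i (\<iota> i) j * (\<Prod>m\<in>{..<k}-{i}. U m (\<iota> m) j))))"
        using tidx_lt[OF t] i by (subst delta_sum) auto
      finally show "(\<Sum>a<n i. -2 * (?R \<iota> * (x j *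
         (V i a j * (if \<iota> i = a then (\<Prod>m\<in>{..<k}-{i}. U m (\<iota> m) j) else 0)))))
        = -2 * (?R \<iota> * (x j * (V i (\<iota> i) j * (\<Prod>m\<in>{..<k}-{i}. U m (\<iota> m) j))))" .
    qed
    also have "\<dots> = (\<Sum>\<iota>\<in>tidx k n. \<Sum>j<r. \<Sum>i<k. -2 * (?R \<iota> * (x j *
         (V i (\<iota> i) j * (\<Prod>m\<in>{..<k}-{i}. U m (\<iota> m) j)))))"
      apply (rule trans[OF sum.cong[OF refl sum.swap]])
      apply (rule trans[OF sum.swap])
      apply (rule sum.cong[OF refl sum.swap])
      done
    also have "\<dots> = -2 * (\<Sum>\<iota>\<in>tidx k n. ?R \<iota> * (\<Sum>j<r. x j * (\<Sum>i<k. V i (\<iota> i) j * (\<Prod>m\<in>{..<k}-{i}. U m (\<iota> m) j))))"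
      by (simp add: sum_distrib_left)
    finally show ?thesis .
  qed
  show ?thesis unfolding 1 2 DL_def
    by (simp add: sum.distrib distrib_left)
qed

lemma ifmul: "(if P then 1 else 0) * (z::real) = (if P then z else 0)" by simp

lemma triple_delta:
  fixes G :: "nat \<Rightarrow> nat \<Rightarrow> nat \<Rightarrow> real"
  assumes "i<k" "a<n i" "j<r"
  shows "(\<Sum>i'<k. \<Sum>a'<n i'. \<Sum>j'<r. (if i' = i \<and> a' = a \<and> j' = j then 1 else 0) * G i' a' j')
     = G i a j"
proof -
  have A: "(\<Sum>j'<r. (if i' = i \<and> a' = a \<and> j' = j then 1 else 0) * G i' a' j')
     = (if i' = i \<and> a' = a then G i a j else 0)" for i' a'
  proof (cases "i' = i \<and> a' = a")
    case True
    then show ?thesis using assms by (simp add: ifmul)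
  qed auto
  have B: "(\<Sum>a'<n i'. \<Sum>j'<r. (if i' = i \<and> a' = a \<and> j' = j then 1 else 0) * G i' a' j')
     = (if i' = i then G i a j else 0)" for i'
    unfolding A using assms by (cases "i' = i") auto
  show ?thesis unfolding B using assms by simp
qed

lemma gradU_eq:
  assumes "i<k" "a<n i" "j<r"
  shows "gradU k n r A U x i a j = GU k n r A U x i a j"
proof -
  let ?V = "\<lambda>i' a' j'. if i' = i \<and> a' = a \<and> j' = j then 1 else (0::real)"
  let ?Uc = "\<lambda>t. U(i := (U i)(a := (U i a)(j := U i a j + t)))"
  have "((\<lambda>t. LG k n r A (?Uc t) x) has_real_derivative DL k n r A U x ?V (\<lambda>_. 0)) (at 0)"
  proof (rule chain)
    fix i' a' j'
    show "((\<lambda>t. ?Uc t i' a' j') has_real_derivative ?V i' a' j') (at 0)"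
    proof (cases "i' = i \<and> a' = a \<and> j' = j")
      case False
      then have "(\<lambda>t. ?Uc t i' a' j') = (\<lambda>t. U i' a' j')" by (auto simp: fun_upd_def)
      then show ?thesis using False by (simp only: if_False) (rule DERIV_const)
    qed (auto intro!: derivative_eq_intros)
  qed auto
  moreover have "DL k n r A U x ?V (\<lambda>_. 0) = GU k n r A U x i a j"
    unfolding DL_lin using triple_delta[of i k a n j r "GU k n r A U x", OF assms] by simp
  ultimately show ?thesis unfolding gradU_def by (simp add: DERIV_imp_deriv)
qed

lemma gradx_eq:
  assumes "j<r"
  shows "gradx k n r A U x j = GX k n r A U x j"
proof -
  let ?y = "\<lambda>j'. if j' = j then 1 else (0::real)"
  have "((\<lambda>t. LG k n r A U (x(j := x j + t))) has_real_derivative DL k n r A U x (\<lambda>_ _ _. 0) ?y) (at 0)"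
  proof (rule chain)
    fix j'
    show "((\<lambda>t. (x(j := x j + t)) j') has_real_derivative ?y j') (at 0)"
      by (cases "j' = j") (auto intro!: derivative_eq_intros)
  qed auto
  moreover have "DL k n r A U x (\<lambda>_ _ _. 0) ?y = GX k n r A U x j"
    unfolding DL_lin using assms by (simp add: ifmul)
  ultimately show ?thesis unfolding gradx_def by (simp add: DERIV_imp_deriv)
qed

lemma sym_skew:
  fixes P S :: "nat \<Rightarrow> nat \<Rightarrow> real"
  assumes "\<And>j l. j<r \<Longrightarrow> l<r \<Longrightarrow> P l j = P j l"
    and "\<And>j l. j<r \<Longrightarrow> l<r \<Longrightarrow> S j l + S l j = 0"
  shows "(\<Sum>j<r. \<Sum>l<r. P l j * S j l) = 0"
proof -
  let ?T = "(\<Sum>j<r. \<Sum>l<r. P l j * S j l)"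
  have "?T = (\<Sum>j<r. \<Sum>l<r. - (P l j * S l j))"
    using assms(2) by (intro sum.cong refl) (metis add_eq_0_iff mult_minus_right lessThan_iff)
  also have "\<dots> = (\<Sum>l<r. \<Sum>j<r. - (P l j * S l j))" by (rule sum.swap)
  also have "\<dots> = (\<Sum>l<r. \<Sum>j<r. - (P j l * S l j))"
    using assms(1) by (intro sum.cong refl) auto
  also have "\<dots> = - ?T" by (simp add: sum_negf)
  finally show ?thesis by simp
qed

lemma stiefel_term:
  fixes V U P :: "nat \<Rightarrow> nat \<Rightarrow> real"
  shows "(\<Sum>a<N. \<Sum>j<r. V a j * (\<Sum>l<r. U a l * P l j)) =
         (\<Sum>j<r. \<Sum>l<r. P l j * (\<Sum>a<N. V a j * U a l))"
proof -
  have "(\<Sum>a<N. \<Sum>j<r. V a j * (\<Sum>l<r. U a l * P l j)) = (\<Sum>a<N. \<Sum>j<r. \<Sum>l<r. P l j * (V a j * U a l))"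
    by (simp add: sum_distrib_left algebra_simps)
  also have "\<dots> = (\<Sum>j<r. \<Sum>a<N. \<Sum>l<r. P l j * (V a j * U a l))" by (rule sum.swap)
  also have "\<dots> = (\<Sum>j<r. \<Sum>l<r. \<Sum>a<N. P l j * (V a j * U a l))" by (rule sum.cong[OF refl sum.swap])
  also have "\<dots> = (\<Sum>j<r. \<Sum>l<r. P l j * (\<Sum>a<N. V a j * U a l))" by (simp add: sum_distrib_left)
  finally show ?thesis .
qed

lemma oblique_term:
  fixes V U :: "nat \<Rightarrow> nat \<Rightarrow> real"
  assumes "\<And>j. j<r \<Longrightarrow> (\<Sum>a<N. V a j * U a j + U a j * V a j) = 0"
  shows "(\<Sum>a<N. \<Sum>j<r. V a j * (U a j * p j)) = 0"
proof -
  have "(\<Sum>a<N. \<Sum>j<r. V a j * (U a j * p j)) = (\<Sum>j<r. \<Sum>a<N. p j * (V a j * U a j))"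
    by (subst sum.swap) (simp add: algebra_simps)
  also have "\<dots> = (\<Sum>j<r. p j * ((\<Sum>a<N. V a j * U a j + U a j * V a j) / 2))"
  proof (intro sum.cong refl)
    fix j
    have "(\<Sum>a<N. V a j * U a j + U a j * V a j) = 2 * (\<Sum>a<N. V a j * U a j)"
      by (simp add: sum_distrib_left mult.commute)
    moreover have "(\<Sum>a<N. p j * (V a j * U a j)) = p j * (\<Sum>a<N. V a j * U a j)"
      by (simp add: sum_distrib_left)
    ultimately show "(\<Sum>a<N. p j * (V a j * U a j)) = p j * ((\<Sum>a<N. V a j * U a j + U a j * V a j) / 2)"
      by simp
  qed
  also have "\<dots> = 0" using assms by simp
  finally show ?thesis .
qed

lemma constraint_deriv:
  assumes eps: "\<epsilon> > 0"
    and c: "\<And>t. \<bar>t\<bar> < \<epsilon> \<Longrightarrow> col_inner n (Uc t) i j l = c"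
    and dU: "\<And>a. a < n i \<Longrightarrow> ((\<lambda>t. Uc t i a j) has_real_derivative V i a j) (at 0)"
    and dU2: "\<And>a. a < n i \<Longrightarrow> ((\<lambda>t. Uc t i a l) has_real_derivative V i a l) (at 0)"
    and h0: "\<And>a. a < n i \<Longrightarrow> Uc 0 i a j = U i a j"
    and h02: "\<And>a. a < n i \<Longrightarrow> Uc 0 i a l = U i a l"
  shows "(\<Sum>a<n i. V i a j * U i a l + U i a j * V i a l) = 0"
proof -
  have "((\<lambda>t. col_inner n (Uc t) i j l) has_real_derivative
     (\<Sum>a<n i. V i a j * Uc 0 i a l + V i a l * Uc 0 i a j)) (at 0)"
    unfolding col_inner_def by (intro DERIV_sum DERIV_mult dU dU2) auto
  moreover have "((\<lambda>t. col_inner n (Uc t) i j l) has_real_derivative 0) (at 0)"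
  proof (rule has_field_derivative_transform_within_open[OF DERIV_const[of c]])
    show "open (ball (0::real) \<epsilon>)" by simp
    show "(0::real) \<in> ball 0 \<epsilon>" using eps by simp
    show "\<And>t. t \<in> ball 0 \<epsilon> \<Longrightarrow> c = col_inner n (Uc t) i j l" using c by (simp add: dist_real_def)
  qed
  ultimately have "(\<Sum>a<n i. V i a j * Uc 0 i a l + V i a l * Uc 0 i a j) = 0" by (rule DERIV_unique)
  moreover have "(\<Sum>a<n i. V i a j * Uc 0 i a l + V i a l * Uc 0 i a j) = (\<Sum>a<n i. V i a j * U i a l + U i a j * V i a l)"
    using h0 h02 by (intro sum.cong refl) simp
  ultimately show ?thesis by simp
qed

lemma kkt_to_crit:
  assumes sk: "s \<le> k" and W0: "in_W k s n r U x" and K: "KKT_point k s n r A U x"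
  shows "critical_point_W k s n r A U x"
proof -
  from K obtain P where Psym: "\<forall>i<s. \<forall>j<r. \<forall>l<r. P i j l = P i l j"
    and PU: "\<forall>i<s. \<forall>a<n i. \<forall>j<r. gradU k n r A U x i a j = (\<Sum>l<r. U i a l * P i l j)"
    unfolding KKT_point_def by blast
  from K obtain p where pU: "\<forall>i. s \<le> i \<and> i < k \<longrightarrow>
           (\<forall>a<n i. \<forall>j<r. gradU k n r A U x i a j = U i a j * p i j)"
    unfolding KKT_point_def by blast
  from K have gx: "\<forall>j<r. gradx k n r A U x j = 0" unfolding KKT_point_def by blast
  show ?thesis unfolding critical_point_W_def
  proof (intro conjI allI impI W0)
    fix \<epsilon> :: real and Uc xc
    assume eps: "\<epsilon> > 0" and WW: "\<forall>t. \<bar>t\<bar> < \<epsilon> \<longrightarrow> in_W k s n r (Uc t) (xc t)"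
      and h0U: "\<forall>i<k. \<forall>a<n i. \<forall>j<r. Uc 0 i a j = U i a j"
      and h0x: "\<forall>j<r. xc 0 j = x j"
      and dU: "\<forall>i<k. \<forall>a<n i. \<forall>j<r. (\<lambda>t. Uc t i a j) differentiable (at 0)"
      and dx: "\<forall>j<r. (\<lambda>t. xc t j) differentiable (at 0)"
    define V where "V i a j = deriv (\<lambda>t. Uc t i a j) 0" for i a j
    define y where "y j = deriv (\<lambda>t. xc t j) 0" for j
    have dV: "((\<lambda>t. Uc t i a j) has_real_derivative V i a j) (at 0)" if "i<k" "a<n i" "j<r" for i a j
      unfolding V_def using dU that DERIV_deriv_iff_real_differentiable by blast
    have dy: "((\<lambda>t. xc t j) has_real_derivative y j) (at 0)" if "j<r" for j
      unfolding y_def using dx that DERIV_deriv_iff_real_differentiable by blast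
    have D: "((\<lambda>t. LG k n r A (Uc t) (xc t)) has_real_derivative DL k n r A U x V y) (at 0)"
      by (rule chain) (use dV dy h0U h0x in auto)
    have Sk: "(\<Sum>a<n i. V i a j * U i a l + U i a j * V i a l) = 0"
      if "i<k" "j<r" "l<r" and cst: "\<And>t. \<bar>t\<bar> < \<epsilon> \<Longrightarrow> col_inner n (Uc t) i j l = c" for i j l c
      by (rule constraint_deriv[OF eps cst]) (use dV h0U that in auto)
    have term0: "(\<Sum>a<n i. \<Sum>j<r. V i a j * GU k n r A U x i a j) = 0" if i: "i<k" for i
    proof (cases "i < s")
      case True
      have "(\<Sum>a<n i. \<Sum>j<r. V i a j * GU k n r A U x i a j) =
            (\<Sum>a<n i. \<Sum>j<r. V i a j * (\<Sum>l<r. U i a l * P i l j))"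
        using PU True i gradU_eq by (intro sum.cong refl) auto
      also have "\<dots> = (\<Sum>j<r. \<Sum>l<r. P i l j * (\<Sum>a<n i. V i a j * U i a l))"
        by (rule stiefel_term)
      also have "\<dots> = 0"
      proof (rule sym_skew)
        show "P i l j = P i j l" if "j<r" "l<r" for j l using Psym True that by auto
        show "(\<Sum>a<n i. V i a j * U i a l) + (\<Sum>a<n i. V i a l * U i a j) = 0" if "j<r" "l<r" for j l
        proof -
          have "(\<Sum>a<n i. V i a j * U i a l + U i a j * V i a l) = 0"
          proof (rule Sk[OF i that])
            fix t :: real assume "\<bar>t\<bar> < \<epsilon>"
            then have "is_stiefel n r (Uc t) i" using WW True unfolding in_W_def by blast
            then show "col_inner n (Uc t) i j l = (if j = l then 1 else 0)"
              unfolding is_stiefel_def using that by blast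
          qed
          then show ?thesis by (simp add: sum.distrib mult.commute)
        qed
      qed
      finally show ?thesis .
    next
      case False
      have "(\<Sum>a<n i. \<Sum>j<r. V i a j * GU k n r A U x i a j) =
            (\<Sum>a<n i. \<Sum>j<r. V i a j * (U i a j * p i j))"
        using pU False i gradU_eq by (intro sum.cong refl) auto
      also have "\<dots> = 0"
      proof (rule oblique_term)
        fix j assume j: "j<r"
        show "(\<Sum>a<n i. V i a j * U i a j + U i a j * V i a j) = 0"
        proof (rule Sk[OF i j j])
          fix t :: real assume "\<bar>t\<bar> < \<epsilon>"
          then have "is_unitcol n r (Uc t) i" using WW False i unfolding in_W_def by auto
          then show "col_inner n (Uc t) i j j = 1" unfolding is_unitcol_def using j by blast
        qed
      qed
      finally show ?thesis .
    qed
    have "DL k n r A U x V y = 0"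
      unfolding DL_lin using term0 gx gradx_eq by simp
    then have "((\<lambda>t. LG k n r A (Uc t) (xc t) / 2) has_real_derivative 0) (at 0)"
      using DERIV_cdivide[OF D, of 2] by simp
    then show "((\<lambda>t. lg k n r A (Uc t) (xc t)) has_real_derivative 0) (at 0)"
      unfolding lg_def .
  qed
qed



definition Nn :: "(nat \<Rightarrow> nat) \<Rightarrow> (nat \<Rightarrow> nat \<Rightarrow> nat \<Rightarrow> real) \<Rightarrow> nat \<Rightarrow> nat \<Rightarrow> (nat \<Rightarrow> real) \<Rightarrow> real \<Rightarrow> real" where
  "Nn n U i j v t = (\<Sum>a<n i. (U i a j + t * v a)^2)"

definition ncol :: "(nat \<Rightarrow> nat) \<Rightarrow> (nat \<Rightarrow> nat \<Rightarrow> nat \<Rightarrow> real) \<Rightarrow> nat \<Rightarrow> nat \<Rightarrow> (nat \<Rightarrow> real) \<Rightarrow> real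
     \<Rightarrow> nat \<Rightarrow> nat \<Rightarrow> nat \<Rightarrow> real" where
  "ncol n U i j v t = U(i := (\<lambda>a c. if c = j then (U i a j + t * v a) / sqrt (Nn n U i j v t) else U i a c))"

lemma Nn_expand:
  assumes "col_inner n U i j j = 1"
  shows "Nn n U i j v t = 1 + 2 * t * (\<Sum>a<n i. U i a j * v a) + t^2 * (\<Sum>a<n i. v a * v a)"
proof -
  have "Nn n U i j v t = (\<Sum>a<n i. U i a j * U i a j + 2 * t * (U i a j * v a) + t^2 * (v a * v a))"
    unfolding Nn_def by (intro sum.cong refl) (simp add: power2_eq_square algebra_simps)
  also have "\<dots> = col_inner n U i j j + 2 * t * (\<Sum>a<n i. U i a j * v a) + t^2 * (\<Sum>a<n i. v a * v a)"
    unfolding col_inner_def by (simp add: sum.distrib sum_distrib_left)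
  finally show ?thesis using assms by simp
qed

lemma ncol_0:
  assumes "col_inner n U i j j = 1"
  shows "ncol n U i j v 0 = U"
proof -
  have "Nn n U i j v 0 = 1" using Nn_expand[OF assms] by simp
  then show ?thesis unfolding ncol_def by (auto intro!: ext)
qed

lemma ncol_deriv:
  assumes "col_inner n U i j j = 1"
  shows "((\<lambda>t. ncol n U i j v t i' a c) has_real_derivative
     (if i' = i \<and> c = j then v a - (\<Sum>b<n i. U i b j * v b) * U i a j else 0)) (at 0)"
proof (cases "i' = i \<and> c = j")
  case True
  define \<beta> where "\<beta> = (\<Sum>b<n i. U i b j * v b)"
  define \<gamma> where "\<gamma> = (\<Sum>b<n i. v b * v b)"
  have e: "(\<lambda>t. ncol n U i j v t i' a c) = (\<lambda>t. (U i a j + t * v a) / sqrt (1 + 2 * t * \<beta> + t^2 * \<gamma>))"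
    using True Nn_expand[OF assms] unfolding ncol_def \<beta>_def \<gamma>_def by auto
  have "((\<lambda>t. (U i a j + t * v a) / sqrt (1 + 2 * t * \<beta> + t^2 * \<gamma>)) has_real_derivative
     v a - \<beta> * U i a j) (at 0)"
    by (rule derivative_eq_intros refl | simp)+
  then show ?thesis using True e \<beta>_def by simp
next
  case False
  then have "(\<lambda>t. ncol n U i j v t i' a c) = (\<lambda>t. U i' a c)" unfolding ncol_def by auto
  then show ?thesis using False by (simp only: if_False) (rule DERIV_const)
qed

lemma ncol_other: "i' \<noteq> i \<Longrightarrow> ncol n U i j v t i' = U i'"
  unfolding ncol_def by simp

lemma ncol_inner_jj:
  assumes "Nn n U i j v t > 0"
  shows "col_inner n (ncol n U i j v t) i j j = 1"
proof -
  have "col_inner n (ncol n U i j v t) i j j = (\<Sum>a<n i. (U i a j + t * v a)^2) / (sqrt (Nn n U i j v t))^2"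
    unfolding col_inner_def ncol_def by (simp add: sum_divide_distrib power2_eq_square)
  also have "\<dots> = 1" using assms unfolding Nn_def by simp
  finally show ?thesis .
qed

lemma ncol_inner_jm:
  assumes "m \<noteq> j"
  shows "col_inner n (ncol n U i j v t) i j m = (\<Sum>a<n i. (U i a j + t * v a) * U i a m) / sqrt (Nn n U i j v t)"
    and "col_inner n (ncol n U i j v t) i m j = (\<Sum>a<n i. (U i a j + t * v a) * U i a m) / sqrt (Nn n U i j v t)"
  using assms unfolding col_inner_def ncol_def by (simp_all add: sum_divide_distrib mult.commute)

lemma ncol_inner_mm:
  assumes "m \<noteq> j" "m' \<noteq> j"
  shows "col_inner n (ncol n U i j v t) i m m' = col_inner n U i m m'"
  using assms unfolding col_inner_def ncol_def by simp

lemma in_W_update: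
  assumes "in_W k s n r U x"
    and "i < s \<Longrightarrow> is_stiefel n r U' i"
    and "s \<le> i \<Longrightarrow> i < k \<Longrightarrow> is_unitcol n r U' i \<and> full_col_rank n r U' i"
    and "\<And>i'. i' \<noteq> i \<Longrightarrow> U' i' = U i'"
  shows "in_W k s n r U' x"
proof -
  have st: "is_stiefel n r U' i' = is_stiefel n r U i'" if "i' \<noteq> i" for i'
    unfolding is_stiefel_def col_inner_def using assms(4)[OF that] by simp
  have uc: "is_unitcol n r U' i' = is_unitcol n r U i'" if "i' \<noteq> i" for i'
    unfolding is_unitcol_def col_inner_def using assms(4)[OF that] by simp
  have fr: "full_col_rank n r U' i' = full_col_rank n r U i'" if "i' \<noteq> i" for i'
    unfolding full_col_rank_def using assms(4)[OF that] by simp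
  show ?thesis unfolding in_W_def
  proof (intro conjI allI impI)
    fix i' assume "i' < s" then show "is_stiefel n r U' i'"
      using assms(1,2) st unfolding in_W_def by (cases "i' = i") auto
  next
    fix i' assume "s \<le> i' \<and> i' < k" then show "is_unitcol n r U' i'"
      using assms(1,3) uc unfolding in_W_def by (cases "i' = i") auto
  next
    fix i' assume "s \<le> i' \<and> i' < k" then show "full_col_rank n r U' i'"
      using assms(1,3) fr unfolding in_W_def by (cases "i' = i") auto
  next
    fix j assume "j < r" then show "x j \<noteq> 0" using assms(1) unfolding in_W_def by blast
  qed
qed

lemma crit_DL:
  assumes C: "critical_point_W k s n r A U x"
    and eps: "\<epsilon> > 0"
    and WW: "\<And>t. \<bar>t\<bar> < \<epsilon> \<Longrightarrow> in_W k s n r (Uc t) (xc t)"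
    and h0U: "\<And>i a j. i<k \<Longrightarrow> a<n i \<Longrightarrow> j<r \<Longrightarrow> Uc 0 i a j = U i a j"
    and h0x: "\<And>j. j<r \<Longrightarrow> xc 0 j = x j"
    and dU: "\<And>i a j. i<k \<Longrightarrow> a<n i \<Longrightarrow> j<r \<Longrightarrow> ((\<lambda>t. Uc t i a j) has_real_derivative V i a j) (at 0)"
    and dx: "\<And>j. j<r \<Longrightarrow> ((\<lambda>t. xc t j) has_real_derivative y j) (at 0)"
  shows "DL k n r A U x V y = 0"
proof -
  have "((\<lambda>t. lg k n r A (Uc t) (xc t)) has_real_derivative 0) (at 0)"
  proof -
    have d1: "\<forall>i<k. \<forall>a<n i. \<forall>j<r. (\<lambda>t. Uc t i a j) differentiable (at 0)"
      using dU real_differentiable_def by blast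
    have d2: "\<forall>j<r. (\<lambda>t. xc t j) differentiable (at 0)"
      using dx real_differentiable_def by blast
    have "\<forall>t. \<bar>t\<bar> < \<epsilon> \<longrightarrow> in_W k s n r (Uc t) (xc t)" using WW by blast
    moreover have "\<forall>i<k. \<forall>a<n i. \<forall>j<r. Uc 0 i a j = U i a j" using h0U by blast
    moreover have "\<forall>j<r. xc 0 j = x j" using h0x by blast
    ultimately show ?thesis using C eps d1 d2 unfolding critical_point_W_def by blast
  qed
  moreover have "((\<lambda>t. lg k n r A (Uc t) (xc t)) has_real_derivative DL k n r A U x V y / 2) (at 0)"
    unfolding lg_def by (intro DERIV_cdivide chain) (use dU dx h0U h0x in auto)
  ultimately show ?thesis using DERIV_unique by fastforce
qed

lemma DL_mode:
  assumes "i < k"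
  shows "DL k n r A U x (\<lambda>i' a c. if i' = i then W a c else 0) (\<lambda>_. 0) =
     (\<Sum>a<n i. \<Sum>c<r. W a c * GU k n r A U x i a c)"
proof -
  have "(\<Sum>i'<k. \<Sum>a<n i'. \<Sum>c<r. (if i' = i then W a c else 0) * GU k n r A U x i' a c)
      = (\<Sum>i'<k. if i' = i then (\<Sum>a<n i. \<Sum>c<r. W a c * GU k n r A U x i a c) else 0)"
    by (intro sum.cong refl) auto
  also have "\<dots> = (\<Sum>a<n i. \<Sum>c<r. W a c * GU k n r A U x i a c)" using assms by simp
  finally show ?thesis unfolding DL_lin by simp
qed



lemma ifmul2: "(if P then x else 0) * (z::real) = (if P then x * z else 0)" by simp

lemma sum_upd:
  fixes f g :: "nat \<Rightarrow> real"
  assumes "j < r" "\<And>m. m < r \<Longrightarrow> m \<noteq> j \<Longrightarrow> f m = g m"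
  shows "(\<Sum>m<r. f m) = (\<Sum>m<r. g m) + (f j - g j)"
proof -
  have "(\<Sum>m<r. f m) = f j + (\<Sum>m\<in>{..<r}-{j}. f m)" using assms(1) by (simp add: sum.remove)
  moreover have "(\<Sum>m<r. g m) = g j + (\<Sum>m\<in>{..<r}-{j}. g m)" using assms(1) by (simp add: sum.remove)
  moreover have "(\<Sum>m\<in>{..<r}-{j}. f m) = (\<Sum>m\<in>{..<r}-{j}. g m)" using assms(2) by (intro sum.cong) auto
  ultimately show ?thesis by simp
qed

lemma sumsq_zero:
  fixes v :: "nat \<Rightarrow> real"
  assumes "(\<Sum>a<N. v a * v a) = 0" "a < N"
  shows "v a = 0"
proof -
  have "\<forall>a\<in>{..<N}. v a * v a = 0" using assms(1) by (subst sum_nonneg_eq_0_iff[symmetric]) auto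
  then show ?thesis using assms(2) by simp
qed

lemma W_cjj:
  assumes "in_W k s n r U x" "i < k" "j < r"
  shows "col_inner n U i j j = 1"
  using assms unfolding in_W_def is_stiefel_def is_unitcol_def
  by (cases "i < s") auto

lemma perp_curve:
  assumes C: "critical_point_W k s n r A U x" and W0: "in_W k s n r U x"
    and i: "i < k" and j: "j < r"
    and perp: "\<And>l. l < r \<Longrightarrow> (\<Sum>a<n i. v a * U i a l) = 0"
  shows "(\<Sum>a<n i. v a * GU k n r A U x i a j) = 0"
proof -
  have cjj: "col_inner n U i j j = 1" using W_cjj[OF W0 i j] .
  define \<gamma> where "\<gamma> = (\<Sum>a<n i. v a * v a)"
  have \<beta>: "(\<Sum>a<n i. U i a j * v a) = 0" using perp[OF j] by (simp add: mult.commute)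
  have \<gamma>0: "\<gamma> \<ge> 0" unfolding \<gamma>_def by (intro sum_nonneg) auto
  have NN: "Nn n U i j v t = 1 + t^2 * \<gamma>" for t using Nn_expand[OF cjj] \<beta> \<gamma>_def by simp
  have Npos: "Nn n U i j v t > 0" for t unfolding NN using \<gamma>0 by (simp add: add_pos_nonneg)
  have inner_jm: "(\<Sum>a<n i. (U i a j + t * v a) * U i a m) = col_inner n U i j m" if "m < r" for t m
  proof -
    have "(\<Sum>a<n i. (U i a j + t * v a) * U i a m) = col_inner n U i j m + t * (\<Sum>a<n i. v a * U i a m)"
      unfolding col_inner_def by (simp add: algebra_simps sum.distrib sum_distrib_left)
    then show ?thesis using perp[OF that] by simp
  qed
  have Wt: "in_W k s n r (ncol n U i j v t) x" for t
  proof (rule in_W_update[OF W0])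
    show "ncol n U i j v t i' = U i'" if "i' \<noteq> i" for i' using ncol_other[OF that] .
  next
    assume "i < s"
    then have st: "is_stiefel n r U i" using W0 unfolding in_W_def by blast
    show "is_stiefel n r (ncol n U i j v t) i" unfolding is_stiefel_def
    proof (intro allI impI)
      fix m m' assume m: "m < r" and m': "m' < r"
      show "col_inner n (ncol n U i j v t) i m m' = (if m = m' then 1 else 0)"
      proof (cases "m = j")
        case True
        show ?thesis
        proof (cases "m' = j")
          case True
          then show ?thesis using \<open>m = j\<close> ncol_inner_jj[OF Npos] by simp
        next
          case False
          then show ?thesis using \<open>m = j\<close> ncol_inner_jm(1)[OF False] inner_jm[OF m'] st m' j
            unfolding is_stiefel_def by auto
        qed
      next
        case False
        show ?thesis
        proof (cases "m' = j")
          case True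
          then show ?thesis using False ncol_inner_jm(2)[OF False] inner_jm[OF m] st m j
            unfolding is_stiefel_def by auto
        next
          case False
          then show ?thesis using \<open>m \<noteq> j\<close> ncol_inner_mm st m m' unfolding is_stiefel_def by auto
        qed
      qed
    qed
  next
    assume si: "s \<le> i" "i < k"
    then have uc: "is_unitcol n r U i" and fr: "full_col_rank n r U i" using W0 unfolding in_W_def by auto
    show "is_unitcol n r (ncol n U i j v t) i \<and> full_col_rank n r (ncol n U i j v t) i"
    proof
      show "is_unitcol n r (ncol n U i j v t) i" unfolding is_unitcol_def
      proof (intro allI impI)
        fix m assume "m < r"
        then show "col_inner n (ncol n U i j v t) i m m = 1"
          using ncol_inner_jj[OF Npos] ncol_inner_mm uc unfolding is_unitcol_def
          by (cases "m = j") auto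
      qed
      show "full_col_rank n r (ncol n U i j v t) i" unfolding full_col_rank_def
      proof (intro allI impI)
        fix c :: "nat \<Rightarrow> real" and m
        assume hc: "\<forall>a<n i. (\<Sum>m<r. c m * ncol n U i j v t i a m) = 0" and m: "m < r"
        define sN where "sN = sqrt (Nn n U i j v t)"
        have sN: "sN > 0" unfolding sN_def using Npos by simp
        define c' where "c' = c(j := c j / sN)"
        define d where "d = c j * t / sN"
        have expand: "(\<Sum>m<r. c m * ncol n U i j v t i a m) = (\<Sum>m<r. c' m * U i a m) + d * v a" for a
        proof -
          have "(\<Sum>m<r. c m * ncol n U i j v t i a m) = (\<Sum>m<r. c' m * U i a m) +
              (c j * ncol n U i j v t i a j - c' j * U i a j)"
            by (rule sum_upd[OF j]) (simp add: ncol_def c'_def)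
          also have "c j * ncol n U i j v t i a j - c' j * U i a j = d * v a"
            unfolding ncol_def c'_def d_def sN_def by (simp add: field_simps add_divide_distrib)
          finally show ?thesis .
        qed
        have "(\<Sum>a<n i. v a * ((\<Sum>m<r. c' m * U i a m) + d * v a)) = 0"
          using hc expand by simp
        moreover have "(\<Sum>a<n i. v a * ((\<Sum>m<r. c' m * U i a m) + d * v a)) =
            (\<Sum>m<r. c' m * (\<Sum>a<n i. v a * U i a m)) + d * \<gamma>"
          unfolding \<gamma>_def
          by (simp add: distrib_left sum.distrib sum_distrib_left algebra_simps sum.swap[of _ "{..<n i}" "{..<r}"])
        moreover have "(\<Sum>m<r. c' m * (\<Sum>a<n i. v a * U i a m)) = 0" using perp by simp
        ultimately have dg: "d * \<gamma> = 0" by simp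
        have dv: "d * v a = 0" if "a < n i" for a
        proof (cases "d = 0")
          case False
          then have "\<gamma> = 0" using dg by simp
          then have "v a = 0" using sumsq_zero that unfolding \<gamma>_def by blast
          then show ?thesis by simp
        qed simp
        have "\<forall>a<n i. (\<Sum>m<r. c' m * U i a m) = 0" using hc expand dv by simp
        then have c'0: "\<forall>m<r. c' m = 0" using fr unfolding full_col_rank_def by blast
        then have "c j = 0" using j sN unfolding c'_def by (metis divide_eq_0_iff fun_upd_same less_irrefl)
        then show "c m = 0" using c'0 m unfolding c'_def by (cases "m = j") auto
      qed
    qed
  qed
  let ?W = "\<lambda>a c. if c = j then v a else 0"
  have dV: "((\<lambda>t. ncol n U i j v t i' a c) has_real_derivative (if i' = i then ?W a c else 0)) (at 0)" for i' a c
    using ncol_deriv[OF cjj, of v i' a c] \<beta> by (cases "i' = i") auto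
  have "DL k n r A U x (\<lambda>i' a c. if i' = i then ?W a c else 0) (\<lambda>_. 0) = 0"
    by (rule crit_DL[OF C, of 1 "ncol n U i j v" "\<lambda>_. x"]) (auto simp: Wt ncol_0[OF cjj] dV)
  moreover have "DL k n r A U x (\<lambda>i' a c. if i' = i then ?W a c else 0) (\<lambda>_. 0) =
      (\<Sum>a<n i. v a * GU k n r A U x i a j)"
    unfolding DL_mode[OF i] using j by (simp add: ifmul2)
  ultimately show ?thesis by simp
qed

lemma obl_mix:
  assumes C: "critical_point_W k s n r A U x" and W0: "in_W k s n r U x"
    and si: "s \<le> i" and i: "i < k" and j: "j < r" and l: "l < r" and jl: "j \<noteq> l"
  shows "(\<Sum>a<n i. (U i a l - col_inner n U i j l * U i a j) * GU k n r A U x i a j) = 0"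
proof -
  have cjj: "col_inner n U i j j = 1" using W_cjj[OF W0 i j] .
  have uc: "is_unitcol n r U i" and fr: "full_col_rank n r U i" using W0 si i unfolding in_W_def by auto
  let ?v = "\<lambda>a. U i a l"
  have \<beta>: "(\<Sum>a<n i. U i a j * ?v a) = col_inner n U i j l" unfolding col_inner_def ..
  have Npos: "Nn n U i j ?v t > 0" for t
  proof -
    have ge: "Nn n U i j ?v t \<ge> 0" unfolding Nn_def by (intro sum_nonneg) auto
    have "Nn n U i j ?v t \<noteq> 0"
    proof
      assume N0: "Nn n U i j ?v t = 0"
      have z: "U i a j + t * U i a l = 0" if "a < n i" for a
      proof -
        have "\<forall>a\<in>{..<n i}. (U i a j + t * U i a l)^2 = 0"
          using N0 unfolding Nn_def by (subst sum_nonneg_eq_0_iff[symmetric]) auto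
        then show ?thesis using that by simp
      qed
      define c where "c = (\<lambda>m. if m = j then 1 else if m = l then t else (0::real))"
      have "\<forall>a<n i. (\<Sum>m<r. c m * U i a m) = 0"
      proof (intro allI impI)
        fix a assume a: "a < n i"
        have "(\<Sum>m<r. c m * U i a m) = (\<Sum>m<r. (if m = j then U i a j else 0) + (if m = l then t * U i a l else 0))"
          unfolding c_def using jl by (intro sum.cong refl) auto
        also have "\<dots> = U i a j + t * U i a l" using j l by (simp add: sum.distrib)
        finally show "(\<Sum>m<r. c m * U i a m) = 0" using z[OF a] by simp
      qed
      then have "c j = 0" using fr j unfolding full_col_rank_def by blast
      then show False unfolding c_def by simp
    qed
    then show ?thesis using ge by simp
  qed
  have Wt: "in_W k s n r (ncol n U i j ?v t) x" for t
  proof (rule in_W_update[OF W0])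
    show "ncol n U i j ?v t i' = U i'" if "i' \<noteq> i" for i' using ncol_other[OF that] .
  next
    assume "i < s" then show "is_stiefel n r (ncol n U i j ?v t) i" using si by simp
  next
    show "is_unitcol n r (ncol n U i j ?v t) i \<and> full_col_rank n r (ncol n U i j ?v t) i"
    proof
      show "is_unitcol n r (ncol n U i j ?v t) i" unfolding is_unitcol_def
      proof (intro allI impI)
        fix m assume "m < r"
        then show "col_inner n (ncol n U i j ?v t) i m m = 1"
          using ncol_inner_jj[OF Npos] ncol_inner_mm uc unfolding is_unitcol_def
          by (cases "m = j") auto
      qed
      show "full_col_rank n r (ncol n U i j ?v t) i" unfolding full_col_rank_def
      proof (intro allI impI)
        fix c :: "nat \<Rightarrow> real" and m
        assume hc: "\<forall>a<n i. (\<Sum>m<r. c m * ncol n U i j ?v t i a m) = 0" and m: "m < r"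
        define sN where "sN = sqrt (Nn n U i j ?v t)"
        have sN: "sN > 0" unfolding sN_def using Npos by simp
        define c'' where "c'' = c(j := c j / sN)"
        define c' where "c' = c''(l := c l + c j * t / sN)"
        have expand: "(\<Sum>m<r. c m * ncol n U i j ?v t i a m) = (\<Sum>m<r. c' m * U i a m)" for a
        proof -
          have "(\<Sum>m<r. c m * ncol n U i j ?v t i a m) = (\<Sum>m<r. c'' m * U i a m) +
              (c j * ncol n U i j ?v t i a j - c'' j * U i a j)"
            by (rule sum_upd[OF j]) (simp add: ncol_def c''_def)
          also have "c j * ncol n U i j ?v t i a j - c'' j * U i a j = (c' l - c'' l) * U i a l"
            unfolding ncol_def c'_def c''_def sN_def using jl by (simp add: field_simps add_divide_distrib)
          also have "(\<Sum>m<r. c'' m * U i a m) + (c' l - c'' l) * U i a l = (\<Sum>m<r. c' m * U i a m)"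
          proof -
            have "(\<Sum>m<r. c' m * U i a m) = (\<Sum>m<r. c'' m * U i a m) + (c' l * U i a l - c'' l * U i a l)"
              by (rule sum_upd[OF l]) (simp add: c'_def)
            then show ?thesis by (simp add: algebra_simps)
          qed
          finally show ?thesis .
        qed
        have "\<forall>a<n i. (\<Sum>m<r. c' m * U i a m) = 0" using hc expand by simp
        then have c'0: "\<forall>m<r. c' m = 0" using fr unfolding full_col_rank_def by blast
        then have "c' j = 0" using j by blast
        then have cj: "c j = 0" using jl sN unfolding c'_def c''_def by simp
        have "c' l = 0" using c'0 l by blast
        then have cl: "c l = 0" using cj unfolding c'_def by simp
        show "c m = 0"
        proof (cases "m = j \<or> m = l")
          case True then show ?thesis using cj cl by auto
        next
          case False then show ?thesis using c'0 m unfolding c'_def c''_def by auto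
        qed
      qed
    qed
  qed
  let ?W = "\<lambda>a c. if c = j then U i a l - col_inner n U i j l * U i a j else 0"
  have dV: "((\<lambda>t. ncol n U i j ?v t i' a c) has_real_derivative (if i' = i then ?W a c else 0)) (at 0)" for i' a c
    using ncol_deriv[OF cjj, of ?v i' a c] \<beta> by (cases "i' = i") auto
  have "DL k n r A U x (\<lambda>i' a c. if i' = i then ?W a c else 0) (\<lambda>_. 0) = 0"
    by (rule crit_DL[OF C, of 1 "ncol n U i j ?v" "\<lambda>_. x"]) (auto simp: Wt ncol_0[OF cjj] dV)
  moreover have "DL k n r A U x (\<lambda>i' a c. if i' = i then ?W a c else 0) (\<lambda>_. 0) =
      (\<Sum>a<n i. (U i a l - col_inner n U i j l * U i a j) * GU k n r A U x i a j)"
    unfolding DL_mode[OF i] using j by (simp add: ifmul2)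
  ultimately show ?thesis by simp
qed



definition rot :: "(nat \<Rightarrow> nat \<Rightarrow> nat \<Rightarrow> real) \<Rightarrow> nat \<Rightarrow> nat \<Rightarrow> nat \<Rightarrow> real \<Rightarrow> nat \<Rightarrow> nat \<Rightarrow> nat \<Rightarrow> real" where
  "rot U i j l t = U(i := (\<lambda>a c. if c = j then cos t * U i a j + sin t * U i a l
      else if c = l then cos t * U i a l - sin t * U i a j else U i a c))"

lemma bil3:
  fixes f g h f' g' h' :: "nat \<Rightarrow> real"
  shows "(\<Sum>a<N. (p * f a + q * g a + w * h a) * (p' * f' a + q' * g' a + w' * h' a)) =
    p * p' * (\<Sum>a<N. f a * f' a) + p * q' * (\<Sum>a<N. f a * g' a) + p * w' * (\<Sum>a<N. f a * h' a) +
    q * p' * (\<Sum>a<N. g a * f' a) + q * q' * (\<Sum>a<N. g a * g' a) + q * w' * (\<Sum>a<N. g a * h' a) +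
    w * p' * (\<Sum>a<N. h a * f' a) + w * q' * (\<Sum>a<N. h a * g' a) + w * w' * (\<Sum>a<N. h a * h' a)"
  by (simp add: sum.distrib sum_distrib_left algebra_simps)

lemma rot_stiefel:
  assumes st: "is_stiefel n r U i" and j: "j < r" and l: "l < r" and jl: "j \<noteq> l"
  shows "is_stiefel n r (rot U i j l t) i"
  unfolding is_stiefel_def
proof (intro allI impI)
  fix m m' assume m: "m < r" and m': "m' < r"
  define al where "al c = (if c = j then cos t else if c = l then - sin t else 0)" for c
  define be where "be c = (if c = j then sin t else if c = l then cos t else 0)" for c
  define ga where "ga c = (if c = j \<or> c = l then 0 else (1::real))" for c
  have col: "rot U i j l t i a c = al c * U i a j + be c * U i a l + ga c * U i a c" for a c
    unfolding rot_def al_def be_def ga_def using jl by auto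
  have ci: "col_inner n U i p q = (if p = q then 1 else 0)" if "p < r" "q < r" for p q
    using st that unfolding is_stiefel_def by blast
  have "col_inner n (rot U i j l t) i m m' =
     al m * al m' * col_inner n U i j j + al m * be m' * col_inner n U i j l + al m * ga m' * col_inner n U i j m' +
     be m * al m' * col_inner n U i l j + be m * be m' * col_inner n U i l l + be m * ga m' * col_inner n U i l m' +
     ga m * al m' * col_inner n U i m j + ga m * be m' * col_inner n U i m l + ga m * ga m' * col_inner n U i m m'"
    unfolding col_inner_def col by (rule bil3)
  also have "\<dots> = (if m = m' then 1 else 0)"
    using j l m m' jl unfolding ci[OF j j] ci[OF j l] ci[OF j m'] ci[OF l j] ci[OF l l] ci[OF l m']
      ci[OF m j] ci[OF m l] ci[OF m m'] al_def be_def ga_def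
    by (auto simp: algebra_simps)
  finally show "col_inner n (rot U i j l t) i m m' = (if m = m' then 1 else 0)" .
qed

lemma two_delta:
  fixes G :: "nat \<Rightarrow> real"
  assumes "j < r" "l < r" "j \<noteq> l"
  shows "(\<Sum>c<r. (if c = j then X else if c = l then Y else 0) * G c) = X * G j + Y * G l"
proof -
  have "(\<Sum>c<r. (if c = j then X else if c = l then Y else 0) * G c) =
      (\<Sum>c<r. (if c = j then X * G j else 0) + (if c = l then Y * G l else 0))"
    using assms by (intro sum.cong refl) auto
  also have "\<dots> = X * G j + Y * G l" using assms by (simp add: sum.distrib)
  finally show ?thesis .
qed

lemma stf_rot:
  assumes C: "critical_point_W k s n r A U x" and W0: "in_W k s n r U x"
    and isl: "i < s" and sk: "s \<le> k" and j: "j < r" and l: "l < r" and jl: "j \<noteq> l"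
  shows "(\<Sum>a<n i. U i a l * GU k n r A U x i a j) = (\<Sum>a<n i. U i a j * GU k n r A U x i a l)"
proof -
  have i: "i < k" using isl sk by simp
  have st: "is_stiefel n r U i" using W0 isl unfolding in_W_def by blast
  have Wt: "in_W k s n r (rot U i j l t) x" for t
  proof (rule in_W_update[OF W0])
    show "rot U i j l t i' = U i'" if "i' \<noteq> i" for i' using that unfolding rot_def by simp
    show "is_stiefel n r (rot U i j l t) i" by (rule rot_stiefel[OF st j l jl])
    show "s \<le> i \<Longrightarrow> i < k \<Longrightarrow> is_unitcol n r (rot U i j l t) i \<and> full_col_rank n r (rot U i j l t) i"
      using isl by simp
  qed
  have r0: "rot U i j l 0 = U" unfolding rot_def by (auto intro!: ext)
  let ?W = "\<lambda>a c. if c = j then U i a l else if c = l then - U i a j else 0"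
  have dV: "((\<lambda>t. rot U i j l t i' a c) has_real_derivative (if i' = i then ?W a c else 0)) (at 0)" for i' a c
  proof (cases "i' = i")
    case True
    show ?thesis
    proof (cases "c = j")
      case True
      then show ?thesis using \<open>i' = i\<close> unfolding rot_def
        by (auto intro!: derivative_eq_intros)
    next
      case False
      show ?thesis
      proof (cases "c = l")
        case True
        then show ?thesis using \<open>i' = i\<close> False jl unfolding rot_def
          by (auto intro!: derivative_eq_intros)
      next
        case False
        then have "(\<lambda>t. rot U i j l t i' a c) = (\<lambda>t. U i' a c)" using \<open>c \<noteq> j\<close> \<open>i' = i\<close> unfolding rot_def by auto
        then show ?thesis using \<open>c \<noteq> j\<close> False \<open>i' = i\<close> by simp
      qed
    qed
  next
    case False
    then have "(\<lambda>t. rot U i j l t i' a c) = (\<lambda>t. U i' a c)" unfolding rot_def by auto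
    then show ?thesis using False by (simp only: if_False) (rule DERIV_const)
  qed
  have "DL k n r A U x (\<lambda>i' a c. if i' = i then ?W a c else 0) (\<lambda>_. 0) = 0"
    by (rule crit_DL[OF C, of 1 "rot U i j l" "\<lambda>_. x"]) (auto simp: Wt r0 dV)
  moreover have "DL k n r A U x (\<lambda>i' a c. if i' = i then ?W a c else 0) (\<lambda>_. 0) =
      (\<Sum>a<n i. U i a l * GU k n r A U x i a j) - (\<Sum>a<n i. U i a j * GU k n r A U x i a l)"
    unfolding DL_mode[OF i] two_delta[OF j l jl] by (simp add: sum_subtractf)
  ultimately show ?thesis by simp
qed



lemma w_zero:
  fixes w g :: "nat \<Rightarrow> real"
  assumes "(\<Sum>a<N. w a * g a) = 0" "(\<Sum>a<N. w a * h a) = 0"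
    and "\<And>a. a < N \<Longrightarrow> w a = g a - h a" and "a < N"
  shows "w a = 0"
proof -
  have "(\<Sum>a<N. w a * w a) = (\<Sum>a<N. w a * g a) - (\<Sum>a<N. w a * h a)"
    using assms(3) by (simp add: sum_subtractf[symmetric] right_diff_distrib)
  then have "(\<Sum>a<N. w a * w a) = 0" using assms(1,2) by simp
  then show ?thesis using sumsq_zero assms(4) by blast
qed

lemma crit_gradx:
  assumes C: "critical_point_W k s n r A U x" and W0: "in_W k s n r U x" and j: "j < r"
  shows "gradx k n r A U x j = 0"
proof -
  have xj: "x j \<noteq> 0" using W0 j unfolding in_W_def by blast
  have "((\<lambda>t. lg k n r A U (x(j := x j + t))) has_real_derivative 0) (at 0)"
  proof -
    have WW: "\<forall>t. \<bar>t\<bar> < \<bar>x j\<bar> \<longrightarrow> in_W k s n r U (x(j := x j + t))"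
      using W0 unfolding in_W_def by auto
    have d1: "\<forall>j'<r. (\<lambda>t. (x(j := x j + t)) j') differentiable (at 0)"
    proof (intro allI impI)
      fix j' show "(\<lambda>t. (x(j := x j + t)) j') differentiable (at 0)"
        by (cases "j' = j") simp_all
    qed
    have "\<bar>x j\<bar> > 0" using xj by simp
    note H = C[unfolded critical_point_W_def, THEN conjunct2, rule_format,
        of "\<bar>x j\<bar>" "\<lambda>_. U" "\<lambda>t. x(j := x j + t)"]
    show ?thesis by (rule H) (use WW d1 \<open>\<bar>x j\<bar> > 0\<close> in auto)
  qed
  then have "((\<lambda>t. 2 * lg k n r A U (x(j := x j + t))) has_real_derivative 2 * 0) (at 0)"
    by (rule DERIV_cmult)
  then have "((\<lambda>t. LG k n r A U (x(j := x j + t))) has_real_derivative 0) (at 0)"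
    unfolding lg_def by simp
  then show ?thesis unfolding gradx_def by (rule DERIV_imp_deriv)
qed

lemma crit_to_kkt:
  assumes sk: "s \<le> k" and C: "critical_point_W k s n r A U x"
  shows "KKT_point k s n r A U x"
proof -
  have W0: "in_W k s n r U x" using C unfolding critical_point_W_def by blast
  let ?G = "GU k n r A U x"
  define P where "P i l j = (\<Sum>a<n i. U i a l * ?G i a j)" for i l j
  define p where "p i j = (\<Sum>a<n i. U i a j * ?G i a j)" for i j
  have Psym: "\<forall>i<s. \<forall>j<r. \<forall>l<r. P i j l = P i l j"
  proof (intro allI impI)
    fix i j l assume "i < s" "j < r" "l < r"
    then show "P i j l = P i l j" unfolding P_def using stf_rot[OF C W0 _ sk] by (cases "j = l") auto
  qed
  have PU: "\<forall>i<s. \<forall>a<n i. \<forall>j<r. gradU k n r A U x i a j = (\<Sum>l<r. U i a l * P i l j)"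
  proof (intro allI impI)
    fix i a j assume isl: "i < s" and a: "a < n i" and j: "j < r"
    have i: "i < k" using isl sk by simp
    have st: "col_inner n U i p q = (if p = q then 1 else 0)" if "p < r" "q < r" for p q
      using W0 isl that unfolding in_W_def is_stiefel_def by blast
    define w where "w b = ?G i b j - (\<Sum>l<r. U i b l * P i l j)" for b
    have perp: "(\<Sum>b<n i. w b * U i b m) = 0" if m: "m < r" for m
    proof -
      have "(\<Sum>b<n i. (\<Sum>l<r. U i b l * P i l j) * U i b m) = (\<Sum>l<r. P i l j * col_inner n U i l m)"
        unfolding col_inner_def
        by (simp add: sum_distrib_left sum_distrib_right algebra_simps sum.swap[of _ "{..<n i}" "{..<r}"])
      also have "\<dots> = (\<Sum>l<r. if l = m then P i m j else 0)"
        using st m by (intro sum.cong refl) auto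
      also have "\<dots> = P i m j" using m by simp
      finally have "(\<Sum>b<n i. (\<Sum>l<r. U i b l * P i l j) * U i b m) = P i m j" .
      moreover have "(\<Sum>b<n i. ?G i b j * U i b m) = P i m j" unfolding P_def by (simp add: mult.commute)
      ultimately show ?thesis unfolding w_def by (simp add: left_diff_distrib sum_subtractf)
    qed
    have g0: "(\<Sum>b<n i. w b * ?G i b j) = 0" by (rule perp_curve[OF C W0 i j perp])
    have h0: "(\<Sum>b<n i. w b * (\<Sum>l<r. U i b l * P i l j)) = 0"
    proof -
      have "(\<Sum>b<n i. w b * (\<Sum>l<r. U i b l * P i l j)) = (\<Sum>l<r. P i l j * (\<Sum>b<n i. w b * U i b l))"
        by (simp add: sum_distrib_left algebra_simps sum.swap[of _ "{..<n i}" "{..<r}"])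
      then show ?thesis using perp by simp
    qed
    have "w a = 0" by (rule w_zero[OF g0 h0 _ a]) (simp add: w_def)
    then show "gradU k n r A U x i a j = (\<Sum>l<r. U i a l * P i l j)"
      using gradU_eq[of i k a n j r A U x, OF i a j] unfolding w_def by simp
  qed
  have pU: "\<forall>i. s \<le> i \<and> i < k \<longrightarrow> (\<forall>a<n i. \<forall>j<r. gradU k n r A U x i a j = U i a j * p i j)"
  proof (intro allI impI)
    fix i a j assume si: "s \<le> i \<and> i < k" and a: "a < n i" and j: "j < r"
    have i: "i < k" using si by simp
    have cjj: "col_inner n U i j j = 1" using W_cjj[OF W0 i j] .
    define w where "w b = ?G i b j - U i b j * p i j" for b
    have perp: "(\<Sum>b<n i. w b * U i b m) = 0" if m: "m < r" for m
    proof (cases "m = j")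
      case True
      have "(\<Sum>b<n i. w b * U i b m) = (\<Sum>b<n i. U i b j * ?G i b j) - p i j * col_inner n U i j j"
        unfolding w_def col_inner_def True
        by (simp add: right_diff_distrib sum_subtractf sum_distrib_left mult.commute mult.left_commute)
      then show ?thesis using cjj unfolding p_def by simp
    next
      case False
      have "(\<Sum>b<n i. (U i b m - col_inner n U i j m * U i b j) * ?G i b j) = 0"
        using obl_mix[OF C W0 _ i j m] si False by auto
      then have "(\<Sum>b<n i. U i b m * ?G i b j) = col_inner n U i j m * p i j"
        unfolding p_def by (simp add: left_diff_distrib sum_subtractf sum_distrib_left algebra_simps)
      moreover have "(\<Sum>b<n i. w b * U i b m) = (\<Sum>b<n i. U i b m * ?G i b j) - p i j * col_inner n U i j m"
        unfolding w_def col_inner_def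
        by (simp add: left_diff_distrib sum_subtractf sum_distrib_left algebra_simps)
      ultimately show ?thesis by simp
    qed
    have g0: "(\<Sum>b<n i. w b * ?G i b j) = 0" by (rule perp_curve[OF C W0 i j perp])
    have h0: "(\<Sum>b<n i. w b * (U i b j * p i j)) = 0"
    proof -
      have "(\<Sum>b<n i. w b * (U i b j * p i j)) = p i j * (\<Sum>b<n i. w b * U i b j)"
        by (simp add: sum_distrib_left algebra_simps)
      then show ?thesis using perp[OF j] by simp
    qed
    have "w a = 0" by (rule w_zero[OF g0 h0 _ a]) (simp add: w_def)
    then show "gradU k n r A U x i a j = U i a j * p i j"
      using gradU_eq[of i k a n j r A U x, OF i a j] unfolding w_def by simp
  qed
  have feas: "feasible_LRPOTA k s n r U" using W0 unfolding in_W_def feasible_LRPOTA_def by blast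
  have gx: "\<forall>j<r. gradx k n r A U x j = 0" using crit_gradx[OF C W0] by blast
  show ?thesis unfolding KKT_point_def using feas Psym PU pU gx by blast
qed


theorem proposition4p5:
  fixes k s r :: nat and n :: "nat \<Rightarrow> nat" and A :: "(nat \<Rightarrow> nat) \<Rightarrow> real"
    and U :: "nat \<Rightarrow> nat \<Rightarrow> nat \<Rightarrow> real" and x :: "nat \<Rightarrow> real"
  assumes "1 \<le> s" and "s \<le> k" and "\<forall>i<k. r \<le> n i"
    and "in_W k s n r U x"
  shows "critical_point_W k s n r A U x \<longleftrightarrow> KKT_point k s n r A U x"
  using kkt_to_crit[OF assms(2,4)] crit_to_kkt[OF assms(2)] by blast

end
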